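(* Let $A$ and $B$ be layouts and $\bar S$ a nested tuple such that both $\mathrm{shape}(A)$ and $\mathrm{shape}(B)$ refine $\bar S$. Then $\Phi_A=\Phi_B$ if and only if $\mathrm{coal}(A,\bar S)=\mathrm{coal}(B,\bar S)$.
   Context: A nested tuple (of integers) is either an integer (depth $0$) or a finite tuple $(X_1,\dots,X_r)$ of nested tuples (rank $r$, modes $X_i$); its flattening $X^\flat$ lists the integer leaves left to right, $\mathrm{len}(X)$ is its length, $\mathrm{entry}_i(X)$ its $i$-th entry, $\mathrm{size}(X)$ the product of entries. A layout $L=S:D$ consists of nested tuples $S$ (positive) and $D$ (nonnegative) of the same nesting pattern; $L^\flat=S^\flat:D^\flat$; the layout function of a flat layout $(s_i):(d_i)$ is $\Phi(x)=\sum x_id_i$, $x_i=\lfloor x/(s_1\cdots s_{i-1})\rfloor\bmod s_i$, on $[0,\prod s_i)$, and $\Phi_L=\Phi_{L^\flat}$. Flat $\mathrm{coal}^\flat$: remove modes with $s_i=1$, then repeatedly replace adjacent modes $s_i,s_{i+1}:d_i,d_{i+1}$ with $d_{i+1}=s_id_i$ by $s_is_{i+1}:d_i$. For a layout $L$ with $\mathrm{coal}^\flat(L^\flat)=(s_1,\dots,s_k):(d_1,\dots,d_k)$: $\mathrm{coal}(L)$ is this flat layout if $k>1$, $s_1:d_1$ (depth $0$) if $k=1$, and $1:0$ if $k=0$. Refinement: $X'$ refines $X$ if $X$ is an integer equal to $\mathrm{size}(X')$, or both have depth $>0$, equal rank, and each mode of $X'$ refines the corresponding mode of $X$. If $S$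 refines $\bar S$ with $\mathrm{len}(\bar S)=m$, then $S$ is obtained from $\bar S$ by replacing its $i$-th leaf by a nested tuple $S_i$ (of size $\mathrm{entry}_i(\bar S)$); for a layout $L=S:D$ the $i$-th relative mode is $L_i=S_i:D_i$ with $D_i$ the corresponding part of $D$. The relative coalesce $\mathrm{coal}(L,\bar S)$ is the layout obtained from the nesting pattern of $\bar S$ by putting the layout $\mathrm{coal}(L_i)$ (shape and stride simultaneously) in place of the $i$-th leaf, for each $1\le i\le m$. *)

theory Defs
  imports Main
begin

text \<open>Nested tuples of integers are nat nt
  (all entries in the paper are nonnegative); a layout is a nested tuple of
  pairs (shape entry, stride entry), which encodes that shape and stride have
  the same nesting pattern.\<close>

datatype 'a nt = Leaf 'a | Node "'a nt list"

fun flat :: "'a nt \<Rightarrow> 'a list" where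
  "flat (Leaf a) = [a]"
| "flat (Node xs) = concat (map flat xs)"

definition nt_size :: "nat nt \<Rightarrow> nat" where
  "nt_size X = prod_list (flat X)"

type_synonym layout = "(nat \<times> nat) nt"

definition shape :: "layout \<Rightarrow> nat nt" where
  "shape L = map_nt fst L"

definition stride :: "layout \<Rightarrow> nat nt" where
  "stride L = map_nt snd L"

definition is_layout :: "layout \<Rightarrow> bool" where
  "is_layout L \<longleftrightarrow> (\<forall>s \<in> set (flat (shape L)). 0 < s)"

definition phi_flat :: "(nat \<times> nat) list \<Rightarrow> nat \<Rightarrow> nat" where
  "phi_flat M x = (\<Sum>i<length M.
      ((x div (\<Prod>j<i. fst (M ! j))) mod fst (M ! i)) * snd (M ! i))"

definition layout_fun :: "layout \<Rightarrow> nat \<Rightarrow> nat option" where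
  "layout_fun L = (\<lambda>x. if x < nt_size (shape L) then Some (phi_flat (flat L) x) else None)"

text \<open>Repeated merging of adjacent modes (s_i,d_i),(s_(i+1),d_(i+1)) with
  d_(i+1) = s_i d_i into (s_i s_(i+1), d_i); performed exhaustively
  (the result is independent of the order of merges).\<close>
fun merge_modes :: "(nat \<times> nat) list \<Rightarrow> (nat \<times> nat) list" where
  "merge_modes [] = []"
| "merge_modes ((s, d) # rest) =
     (case merge_modes rest of
        [] \<Rightarrow> [(s, d)]
      | (s2, d2) # r \<Rightarrow> (if d2 = s * d then (s * s2, d) # r else (s, d) # (s2, d2) # r))"

definition coal_flat :: "(nat \<times> nat) list \<Rightarrow> (nat \<times> nat) list" where
  "coal_flat M = merge_modes (filter (\<lambda>(s, d). s \<noteq> 1) M)"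

definition coal :: "layout \<Rightarrow> layout" where
  "coal L = (let C = coal_flat (flat L) in
     if length C > 1 then Node (map Leaf C)
     else if length C = 1 then Leaf (hd C)
     else Leaf (1, 0))"

fun refines :: "nat nt \<Rightarrow> nat nt \<Rightarrow> bool" where
  "refines X' (Leaf n) \<longleftrightarrow> n = nt_size X'"
| "refines (Leaf _) (Node _) \<longleftrightarrow> False"
| "refines (Node xs') (Node xs) \<longleftrightarrow>
     list_all2 refines xs' xs"

fun rel_coal :: "layout \<Rightarrow> nat nt \<Rightarrow> layout"
and rel_coals :: "layout list \<Rightarrow> nat nt list \<Rightarrow> layout list" where
  "rel_coal L (Leaf _) = coal L"
| "rel_coal (Leaf x) (Node bs) = Leaf x"
| "rel_coal (Node ls) (Node bs) = Node (rel_coals ls bs)"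
| "rel_coals (l # ls) (b # bs) = rel_coal l b # rel_coals ls bs"
| "rel_coals [] _ = []"
| "rel_coals _ [] = []"

end

theory Submission
  imports Defs
begin

fun phr :: "(nat \<times> nat) list \<Rightarrow> nat \<Rightarrow> nat" where
  "phr [] x = 0"
| "phr ((s,d)#M) x = (x mod s) * d + phr M (x div s)"

definition psz :: "(nat \<times> nat) list \<Rightarrow> nat" where
  "psz M = prod_list (map fst M)"

lemma psz_simps[simp]: "psz [] = 1" "psz (p#M) = fst p * psz M" "psz (M1@M2) = psz M1 * psz M2"
  by (auto simp: psz_def)

lemma phi_flat_phr: "phi_flat M x = phr M x"
proof (induction M arbitrary: x)
  case Nil
  then show ?case by (simp add: phi_flat_def)
next
  case (Cons p M)
  obtain s d where p: "p = (s,d)" by fastforce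
  have "phi_flat (p#M) x = (x mod s) * d + (\<Sum>i<length M.
      ((x div s div (\<Prod>j<i. fst (M ! j))) mod fst (M ! i)) * snd (M ! i))"
    unfolding phi_flat_def
    by (simp only: length_Cons sum.lessThan_Suc_shift prod.lessThan_Suc_shift nth_Cons_0 nth_Cons_Suc
        p fst_conv snd_conv lessThan_0 prod.empty div_by_1 div_mult2_eq)
  also have "\<dots> = (x mod s) * d + phi_flat M (x div s)" by (simp add: phi_flat_def)
  finally show ?case using Cons p by simp
qed

lemma phr_zero[simp]: "phr M 0 = 0"
proof (induction M)
  case (Cons p M) then show ?case by (cases p) auto
qed simp

lemma phr_append: "phr (M1@M2) x = phr M1 x + phr M2 (x div psz M1)"
  by (induction M1 x rule: phr.induct) (auto simp: div_mult2_eq)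

lemma phr_mod: "phr M (x mod psz M) = phr M x"
proof (induction M x rule: phr.induct)
  case (2 s d M x)
  have a: "(x mod (s * psz M)) mod s = x mod s"
    by (simp add: mod_mult_right_eq[symmetric] mod_mod_cancel)
  have b: "(x mod (s * psz M)) div s = (x div s) mod psz M"
  proof (cases "s = 0")
    case False then show ?thesis
      by (simp add: mod_mult2_eq)
  qed simp
  show ?case using 2 by (simp add: a b)
qed simp

lemma phr_filter: "phr (filter (\<lambda>(s, d). s \<noteq> 1) M) x = phr M x"
  by (induction M x rule: phr.induct) auto

lemma psz_filter: "psz (filter (\<lambda>(s, d). s \<noteq> 1) M) = psz M"
  by (induction M) auto

lemma merge_ok: "phr (merge_modes M) x = phr M x \<and> psz (merge_modes M) = psz M"
proof (induction M arbitrary: x rule: merge_modes.induct)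
  case (2 s d rest)
  show ?case
  proof (cases "merge_modes rest")
    case Nil
    then show ?thesis using 2[of "x div s"] by simp
  next
    case (Cons q r)
    obtain s2 d2 where q: "q = (s2,d2)" by fastforce
    have IH: "phr ((s2,d2)#r) y = phr rest y" "s2 * psz r = psz rest" for y
      using 2[of y] Cons q by auto
    show ?thesis
    proof (cases "d2 = s * d")
      case True
      have "x mod (s * s2) * d + phr r (x div (s * s2)) =
            x mod s * d + (x div s mod s2 * (s * d) + phr r (x div s div s2))"
        by (simp only: mod_mult2_eq[of x s s2] div_mult2_eq[of x s s2]) (simp add: algebra_simps)
      then show ?thesis using Cons q True IH(1)[of "x div s"] IH(2)
        by simp
    next
      case False
      then show ?thesis using Cons q IH(1)[of "x div s"] IH(2) by simp
    qed
  qed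
qed simp

fun coalesced :: "(nat \<times> nat) list \<Rightarrow> bool" where
  "coalesced [] = True"
| "coalesced [(s,d)] = (2 \<le> s)"
| "coalesced ((s,d)#(t,e)#r) = (2 \<le> s \<and> e \<noteq> s * d \<and> coalesced ((t,e)#r))"

lemma coalesced_tl: "coalesced (p#M) \<Longrightarrow> coalesced M"
  by (cases p; cases M rule: coalesced.cases) auto

lemma coalesced_hd: "coalesced ((s,d)#M) \<Longrightarrow> 2 \<le> s"
  by (cases M rule: coalesced.cases) auto

lemma coalesced_psz: "coalesced M \<Longrightarrow> M \<noteq> [] \<Longrightarrow> 2 \<le> psz M"
proof (induction M rule: coalesced.induct)
  case (3 s d t e r)
  then have "2 \<le> psz ((t,e)#r)" by simp
  moreover have "2 \<le> s" using 3 by simp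
  moreover have "1 * psz ((t,e)#r) \<le> s * psz ((t,e)#r)" using 3 by (intro mult_le_mono1) simp
  ultimately have "2 \<le> s * psz ((t,e)#r)" by (simp only: mult_1)
  then show ?case by (simp only: psz_simps fst_conv)
qed auto

lemma coalesced_psz_pos: "coalesced M \<Longrightarrow> 0 < psz M"
  using coalesced_psz[of M] by (cases "M = []") auto

lemma merge_coalesced:
  "\<forall>p\<in>set M. 2 \<le> fst p \<Longrightarrow> coalesced (merge_modes M)"
proof (induction M rule: merge_modes.induct)
  case (2 s d rest)
  show ?case
  proof (cases "merge_modes rest")
    case Nil
    then show ?thesis using 2 by simp
  next
    case (Cons q r)
    obtain s2 d2 where q: "q = (s2,d2)" by fastforce
    have c: "coalesced ((s2,d2)#r)" using 2 Cons q by simp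
    have s: "2 \<le> s" using 2 by simp
    have s2: "2 \<le> s2" using coalesced_hd c by blast
    show ?thesis
    proof (cases "d2 = s * d")
      case True
      have "2 \<le> s * s2" using s s2 by (metis le_trans mult_le_mono1 nat_mult_1 one_le_numeral)
      moreover have "coalesced ((s * s2, d)#r)"
      proof (cases r)
        case Nil then show ?thesis using \<open>2 \<le> s * s2\<close> by simp
      next
        case (Cons q3 r3)
        obtain s3 d3 where "q3 = (s3,d3)" by fastforce
        then show ?thesis using c Cons True \<open>2 \<le> s * s2\<close> by (auto simp: mult.assoc)
      qed
      ultimately show ?thesis using Cons q True by simp
    next
      case False
      then show ?thesis using Cons q c s by simp
    qed
  qed
qed simp

lemma coal_flat_props:
  assumes "\<forall>p\<in>set M. 0 < fst p"
  shows "coalesced (coal_flat M)" "psz (coal_flat M) = psz M" "phr (coal_flat M) x = phr M x"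
proof -
  have "\<forall>p\<in>set (filter (\<lambda>(s, d). s \<noteq> 1) M). 2 \<le> fst p" using assms by fastforce
  then show "coalesced (coal_flat M)" unfolding coal_flat_def by (rule merge_coalesced)
  show "psz (coal_flat M) = psz M" unfolding coal_flat_def using merge_ok psz_filter by metis
  show "phr (coal_flat M) x = phr M x" unfolding coal_flat_def using merge_ok phr_filter by metis
qed

lemma not_less_hd:
  assumes c1: "coalesced ((s,d)#R)" and c2: "coalesced ((t,e)#Q)"
    and sz: "psz ((s,d)#R) = psz ((t,e)#Q)"
    and eq: "\<forall>x < psz ((s,d)#R). phr ((s,d)#R) x = phr ((t,e)#Q) x"
  shows "\<not> s < t"
proof
  assume st: "s < t"
  have s2: "2 \<le> s" using coalesced_hd c1 by blast
  have t2: "2 \<le> t" using coalesced_hd c2 by blast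
  have Qp: "0 < psz Q" using coalesced_psz_pos coalesced_tl c2 by blast
  have "R \<noteq> []"
  proof
    assume "R = []"
    then have "psz ((s,d)#R) = s" by simp
    moreover have "t * 1 \<le> t * psz Q" using Qp by (intro mult_le_mono2) simp
    ultimately show False using sz st by (simp only: psz_simps fst_conv mult_1_right)
  qed
  then obtain s' d' R' where R: "R = (s',d')#R'" by (cases R) auto
  have s'2: "2 \<le> s'" using coalesced_hd coalesced_tl c1 R by blast
  have R'p: "0 < psz R'" using coalesced_psz_pos coalesced_tl c1 R by blast
  have "2 \<le> psz R" using coalesced_psz coalesced_tl c1 R by blast
  then have "s * 1 < s * psz R" using s2 by (intro mult_strict_left_mono) auto
  then have lts: "s < psz ((s,d)#R)" by simp
  have lt1: "1 < psz ((s,d)#R)" using lts s2 by linarith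
  have "phr ((s,d)#R) 1 = d" using s2 by simp
  moreover have "phr ((t,e)#Q) 1 = e" using t2 by simp
  ultimately have de: "d = e" using eq lt1 by metis
  have "phr ((s,d)#R) s = d'" using s'2 s2 R by simp
  moreover have "phr ((t,e)#Q) s = s * e" using st by simp
  ultimately have "d' = s * d" using eq lts de by metis
  then show False using c1 R by simp
qed

lemma uniq:
  "coalesced M1 \<Longrightarrow> coalesced M2 \<Longrightarrow> psz M1 = psz M2 \<Longrightarrow>
   \<forall>x < psz M1. phr M1 x = phr M2 x \<Longrightarrow> M1 = M2"
proof (induction M1 arbitrary: M2)
  case Nil
  then show ?case using coalesced_psz[of M2] by (cases "M2 = []") auto
next
  case (Cons p R)
  obtain s d where p: "p = (s,d)" by fastforce
  have "M2 \<noteq> []" using Cons coalesced_psz[of "p#R"] by auto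
  then obtain t e Q where M2: "M2 = (t,e)#Q" by (metis list.exhaust prod.exhaust)
  have "\<not> s < t" using not_less_hd[of s d R t e Q] Cons p M2 by simp
  moreover have "\<not> t < s" using not_less_hd[of t e Q s d R] Cons p M2 by simp
  ultimately have st: "s = t" by simp
  have s2: "2 \<le> s" using coalesced_hd Cons p by blast
  have Rp: "0 < psz R" using coalesced_psz_pos coalesced_tl Cons by blast
  have "1 < psz (p#R)" using s2 Rp p
    by (metis One_nat_def Suc_1 Suc_le_lessD fst_conv less_le_trans mult_le_mono2 nat_mult_1_right psz_simps(2) Suc_leI)
  then have "phr (p#R) 1 = phr M2 1" using Cons.prems by blast
  then have de: "d = e" using s2 st p M2 by simp
  have sz: "psz R = psz Q" using Cons p M2 st s2 by simp
  have "\<forall>y < psz R. phr R y = phr Q y"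
  proof (intro allI impI)
    fix y assume y: "y < psz R"
    have "s * y < psz (p#R)" using y s2 p by simp
    then have "phr (p#R) (s*y) = phr M2 (s*y)" using Cons by blast
    then show "phr R y = phr Q y" using p M2 st s2 by simp
  qed
  then have "R = Q" using Cons.IH[of Q] Cons.prems coalesced_tl M2 sz by blast
  then show ?case using p M2 st de by simp
qed

lemma flat_map_nt: "flat (map_nt f X) = map f (flat X)"
  by (induction X) (auto simp: map_concat comp_def intro!: arg_cong[where f=concat])

lemma size_shape: "nt_size (shape L) = psz (flat L)"
  by (simp add: nt_size_def shape_def flat_map_nt psz_def)

lemma nt_size_Node: "nt_size (Node xs) = prod_list (map nt_size xs)"
  by (induction xs) (auto simp: nt_size_def)

lemma refines_size: "refines X Y \<Longrightarrow> nt_size X = nt_size Y"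
proof (induction X Y rule: refines.induct)
  case (1 X' n)
  then show ?case by (simp add: nt_size_def)
next
  case (3 xs' xs)
  then have l: "list_all2 refines xs' xs" by simp
  then have "\<forall>i<length xs. nt_size (xs' ! i) = nt_size (xs ! i)"
    using 3 by (auto simp: list_all2_conv_all_nth)
  then have "map nt_size xs' = map nt_size xs"
    using l by (auto simp: list_all2_conv_all_nth intro: nth_equalityI)
  then show ?case by (simp add: nt_size_Node)
qed simp

definition pos :: "layout \<Rightarrow> bool" where
  "pos L \<longleftrightarrow> (\<forall>p\<in>set (flat L). 0 < fst p)"

lemma is_layout_pos: "is_layout L \<longleftrightarrow> pos L"
  by (simp add: is_layout_def pos_def shape_def flat_map_nt)

definition mk :: "(nat \<times> nat) list \<Rightarrow> layout" where
  "mk C = (if length C > 1 then Node (map Leaf C)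
     else if length C = 1 then Leaf (hd C)
     else Leaf (1, 0))"

lemma coal_mk: "coal L = mk (coal_flat (flat L))"
  by (simp add: coal_def mk_def Let_def)

lemma mk_inj:
  assumes "coalesced C1" "coalesced C2" "mk C1 = mk C2"
  shows "C1 = C2"
proof -
  have h: "fst (hd C) \<noteq> 1" if "coalesced C" "length C = 1" for C
    using that coalesced_hd by (cases C) fastforce+
  show ?thesis
  proof (cases "length C1 > 1")
    case True
    then have "length C2 > 1" using assms(3) by (auto simp: mk_def split: if_splits)
    have "inj Leaf" by (auto intro: injI)
    then have i: "map Leaf C1 = map Leaf C2 \<Longrightarrow> C1 = C2" using inj_map_eq_map by blast
    then show ?thesis using assms(3) True \<open>length C2 > 1\<close> by (auto simp: mk_def)
  next
    case False
    then show ?thesis using assms h[OF assms(1)] h[OF assms(2)]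
      by (cases C1; cases C2) (auto simp: mk_def split: if_splits)
  qed
qed

lemma pos_coalesced: "\<forall>p\<in>set M. 0 < fst p \<Longrightarrow> coalesced (coal_flat M)"
  using coal_flat_props(1) by blast

lemma leaf_case:
  assumes pM: "\<forall>p\<in>set M. 0 < fst p" and pN: "\<forall>p\<in>set N. 0 < fst p" and sz: "psz M = psz N"
  shows "(\<forall>x<psz M. phr M x = phr N x) \<longleftrightarrow> mk (coal_flat M) = mk (coal_flat N)"
proof
  assume h: "\<forall>x<psz M. phr M x = phr N x"
  have "coal_flat M = coal_flat N"
    apply (rule uniq)
    using coal_flat_props[OF pM] coal_flat_props[OF pN] sz h by auto
  then show "mk (coal_flat M) = mk (coal_flat N)" by simp
next
  assume "mk (coal_flat M) = mk (coal_flat N)"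
  then have "coal_flat M = coal_flat N"
    using mk_inj pos_coalesced pM pN by blast
  then show "\<forall>x<psz M. phr M x = phr N x"
    by (metis coal_flat_props(3) pM pN)
qed

lemma block:
  assumes "psz M1 = p" "psz N1 = p" "0 < p" "0 < q"
  shows "(\<forall>x<p*q. phr (M1@M2) x = phr (N1@N2) x) \<longleftrightarrow>
    ((\<forall>x<p. phr M1 x = phr N1 x) \<and> (\<forall>y<q. phr M2 y = phr N2 y))"
proof
  assume h: "\<forall>x<p*q. phr (M1@M2) x = phr (N1@N2) x"
  have 1: "\<forall>x<p. phr M1 x = phr N1 x"
  proof (intro allI impI)
    fix x assume x: "x < p"
    then have "x < p * q" using assms(4) by (metis less_le_trans mult_le_mono2 nat_mult_1_right Suc_leI One_nat_def)
    then have "phr (M1@M2) x = phr (N1@N2) x" using h by blast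
    then show "phr M1 x = phr N1 x" using x assms by (simp add: phr_append)
  qed
  have 2: "\<forall>y<q. phr M2 y = phr N2 y"
  proof (intro allI impI)
    fix y assume y: "y < q"
    then have "p * y < p * q" using assms(3) by simp
    then have e: "phr (M1@M2) (p*y) = phr (N1@N2) (p*y)" using h by blast
    have "phr M1 (p*y) = 0" using phr_mod[of M1 "p*y"] assms by simp
    moreover have "phr N1 (p*y) = 0" using phr_mod[of N1 "p*y"] assms by simp
    ultimately show "phr M2 y = phr N2 y" using e assms by (simp add: phr_append)
  qed
  show "(\<forall>x<p. phr M1 x = phr N1 x) \<and> (\<forall>y<q. phr M2 y = phr N2 y)" using 1 2 by blast
next
  assume h: "(\<forall>x<p. phr M1 x = phr N1 x) \<and> (\<forall>y<q. phr M2 y = phr N2 y)"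
  show "\<forall>x<p*q. phr (M1@M2) x = phr (N1@N2) x"
  proof (intro allI impI)
    fix x assume x: "x < p * q"
    have "x div p < q" using x assms(3) by (simp add: div_less_iff_less_mult mult.commute)
    moreover have "phr M1 x = phr N1 x"
      using h phr_mod[of M1 x] phr_mod[of N1 x] assms mod_less_divisor by metis
    ultimately show "phr (M1@M2) x = phr (N1@N2) x" using h assms by (simp add: phr_append)
  qed
qed

lemma psz_pos: "\<forall>p\<in>set M. 0 < fst p \<Longrightarrow> 0 < psz M"
  by (induction M) auto

definition Pr :: "nat nt \<Rightarrow> bool" where
  "Pr S \<longleftrightarrow> (\<forall>A B. pos A \<longrightarrow> pos B \<longrightarrow> refines (shape A) S \<longrightarrow> refines (shape B) S \<longrightarrow>
     ((\<forall>x<nt_size S. phr (flat A) x = phr (flat B) x) \<longleftrightarrow> rel_coal A S = rel_coal B S))"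

lemma psz_concat: "psz (concat (map flat as)) = prod_list (map (\<lambda>a. psz (flat a)) as)"
  by (induction as) auto

lemma lists:
  "(\<forall>b\<in>set bs. Pr b) \<Longrightarrow> list_all2 (\<lambda>a b. refines (shape a) b) as bs \<Longrightarrow>
   list_all2 (\<lambda>a b. refines (shape a) b) cs bs \<Longrightarrow> \<forall>a\<in>set as. pos a \<Longrightarrow> \<forall>c\<in>set cs. pos c \<Longrightarrow>
   ((\<forall>x<prod_list (map nt_size bs). phr (concat (map flat as)) x = phr (concat (map flat cs)) x)
     \<longleftrightarrow> rel_coals as bs = rel_coals cs bs)"
proof (induction bs arbitrary: as cs)
  case Nil
  then show ?case by simp
next
  case (Cons b bs)
  obtain a as' where as: "as = a # as'" using Cons.prems(2) by (cases as) auto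
  obtain c cs' where cs: "cs = c # cs'" using Cons.prems(3) by (cases cs) auto
  have ra: "refines (shape a) b" and rc: "refines (shape c) b"
    using Cons.prems as cs by auto
  have pa: "pos a" "pos c" using Cons.prems as cs by auto
  have sa: "psz (flat a) = nt_size b" using refines_size[OF ra] size_shape by metis
  have sc: "psz (flat c) = nt_size b" using refines_size[OF rc] size_shape by metis
  have bpos: "0 < nt_size b" using sa pa(1) psz_pos unfolding pos_def by metis
  have "\<forall>b\<in>set bs. 0 < nt_size b"
  proof
    fix b' assume b': "b' \<in> set bs"
    have la': "list_all2 (\<lambda>a b. refines (shape a) b) as' bs" using Cons.prems(2) as by simp
    obtain i where i: "i < length bs" "b' = bs ! i" using b' by (auto simp: in_set_conv_nth)
    have "as' ! i \<in> set as'" "refines (shape (as' ! i)) b'"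
      using la' i by (auto simp: list_all2_conv_all_nth)
    then obtain a' where "a' \<in> set as'" "refines (shape a') b'" by blast
    then show "0 < nt_size b'" using Cons.prems(4) as refines_size size_shape psz_pos
      unfolding pos_def by (metis list.set_intros(2))
  qed
  then have qpos: "0 < prod_list (map nt_size bs)"
    by (induction bs) auto
  have IH: "(\<forall>x<prod_list (map nt_size bs). phr (concat (map flat as')) x = phr (concat (map flat cs')) x)
     \<longleftrightarrow> rel_coals as' bs = rel_coals cs' bs"
    using Cons.IH[of as' cs'] Cons.prems as cs by auto
  have Pb: "Pr b" using Cons.prems by simp
  have hd: "(\<forall>x<nt_size b. phr (flat a) x = phr (flat c) x) \<longleftrightarrow> rel_coal a b = rel_coal c b"
    using Pb pa ra rc unfolding Pr_def by blast
  show ?case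
    using block[OF sa sc bpos qpos, of "concat (map flat as')" "concat (map flat cs')"] IH hd as cs
    by simp
qed

lemma main: "Pr S"
proof (induction S)
  case (Leaf n)
  show ?case unfolding Pr_def
  proof (intro allI impI)
    fix A B assume pA: "pos A" and pB: "pos B" and rA: "refines (shape A) (Leaf n)"
      and rB: "refines (shape B) (Leaf n)"
    have sA: "psz (flat A) = n" using rA size_shape by simp
    have sB: "psz (flat B) = n" using rB size_shape by simp
    show "(\<forall>x<nt_size (Leaf n). phr (flat A) x = phr (flat B) x) \<longleftrightarrow> rel_coal A (Leaf n) = rel_coal B (Leaf n)"
      using leaf_case[of "flat A" "flat B"] pA pB sA sB
      by (simp add: coal_mk pos_def nt_size_def)
  qed
next
  case (Node bs)
  show ?case unfolding Pr_def
  proof (intro allI impI)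
    fix A B assume pA: "pos A" and pB: "pos B" and rA: "refines (shape A) (Node bs)"
      and rB: "refines (shape B) (Node bs)"
    obtain as where A: "A = Node as" using rA by (cases A) (auto simp: shape_def)
    obtain cs where B: "B = Node cs" using rB by (cases B) (auto simp: shape_def)
    have la: "list_all2 (\<lambda>a b. refines (shape a) b) as bs"
      using rA A by (simp add: shape_def list_all2_map1)
    have lc: "list_all2 (\<lambda>a b. refines (shape a) b) cs bs"
      using rB B by (simp add: shape_def list_all2_map1)
    have "\<forall>a\<in>set as. pos a" using pA A by (auto simp: pos_def)
    moreover have "\<forall>c\<in>set cs. pos c" using pB B by (auto simp: pos_def)
    moreover have "\<forall>b\<in>set bs. Pr b" using Node by blast
    ultimately show "(\<forall>x<nt_size (Node bs). phr (flat A) x = phr (flat B) x) \<longleftrightarrow> rel_coal A (Node bs) = rel_coal B (Node bs)"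
      using lists[OF _ la lc] A B by (simp add: nt_size_Node)
  qed
qed

theorem mainTheorem17:
  fixes A B :: layout and Sbar :: "nat nt"
  assumes "is_layout A" and "is_layout B"
    and "refines (shape A) Sbar" and "refines (shape B) Sbar"
  shows "layout_fun A = layout_fun B \<longleftrightarrow> rel_coal A Sbar = rel_coal B Sbar"
proof -
  have sA: "nt_size (shape A) = nt_size Sbar" using refines_size assms(3) by blast
  have sB: "nt_size (shape B) = nt_size Sbar" using refines_size assms(4) by blast
  have "layout_fun A = layout_fun B \<longleftrightarrow> (\<forall>x<nt_size Sbar. phr (flat A) x = phr (flat B) x)"
    unfolding layout_fun_def sA sB phi_flat_phr
    by (auto simp: fun_eq_iff split: if_splits)
  then show ?thesis
    using main assms is_layout_pos unfolding Pr_def by blast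
qed

end
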